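(* Let $m,n\geq 0$ be integers. Then \[ \sum_{k=1}^{n}\frac{(-1)^k q^{mk+\binom{k+1}{2}}}{(q;q)_k (q;q)_{n-k}(q^k;q)_{m+1}} -\sum_{k=1}^{m}\frac{(-1)^k q^{nk+\binom{k+1}{2}}}{(q;q)_k (q;q)_{m-k}(q^k;q)_{n+1}} =\frac{1}{(q;q)_{m}(q;q)_{n}}\left(\sum_{k=1}^m\frac{q^k}{1-q^k}-\sum_{k=1}^n\frac{q^k}{1-q^k}\right). \]
   Context: For $N\geq 0$, $(x;q)_N=(1-x)(1-xq)\cdots(1-xq^{N-1})$ (with $(x;q)_0=1$). The identity is one of rational functions in $q$. *)

theory Defs
  imports Main
begin

definition qpoch :: "'a::comm_ring_1 \<Rightarrow> 'a \<Rightarrow> nat \<Rightarrow> 'a" where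
  "qpoch x q N = (\<Prod>i<N. (1 - x * q ^ i))"

end

theory Submission
  imports Defs
begin

lemma qpoch_0[simp]: "qpoch x q 0 = 1" by (simp add: qpoch_def)
lemma qpoch_Suc: "qpoch x q (Suc N) = qpoch x q N * (1 - x*q^N)" by (simp add: qpoch_def)

lemma qpoch_nz:
  fixes q :: "'a::field"
  assumes nz: "\<forall>j::nat. j \<ge> 1 \<longrightarrow> q ^ j \<noteq> 1"
  shows "qpoch q q N \<noteq> 0"
proof (induction N)
  case 0 then show ?case by simp
next
  case (Suc N)
  have "q * q^N \<noteq> 1" using nz[rule_format, of "Suc N"] by simp
  then show ?case using Suc by (simp add: qpoch_Suc)
qed

lemma qpoch_shift:
  fixes q :: "'a::field"
  shows "qpoch q q k * qpoch (q^k) q (m+1) = qpoch q q (k+m) * (1 - q^k)"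
proof (induction m)
  case 0 then show ?case by (simp add: qpoch_Suc)
next
  case (Suc m)
  have "qpoch q q k * qpoch (q^k) q (Suc m+1) = (qpoch q q k * qpoch (q^k) q (m+1)) * (1 - q^k*q^(Suc m))"
    by (simp add: qpoch_Suc)
  also have "\<dots> = qpoch q q (k+m) * (1 - q^k) * (1 - q^k*q^(Suc m))" using Suc by simp
  also have "\<dots> = qpoch q q (k + Suc m) * (1 - q^k)"
    by (simp add: qpoch_Suc power_add algebra_simps)
  finally show ?case .
qed

lemma nz1: fixes q :: "'a::field"
  assumes nz: "\<forall>j::nat. j \<ge> 1 \<longrightarrow> q ^ j \<noteq> 1" and "j \<ge> 1"
  shows "1 - q^j \<noteq> 0" using nz assms(2) by auto

definition sig :: "'a::field \<Rightarrow> nat \<Rightarrow> nat \<Rightarrow> 'a" where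
 "sig q m n = (\<Sum>k\<le>n. (-1)^k * q^(m*k + ((k+1) choose 2)) / (qpoch q q (n-k) * qpoch q q (m+k+1)))"

lemma choose2_Suc: "((Suc k + 1) choose 2) = ((k+1) choose 2) + (k+1)"
  by (simp add: numeral_2_eq_2)

lemma sig_term:
  fixes q :: "'a::field"
  assumes nz: "\<forall>j::nat. j \<ge> 1 \<longrightarrow> q ^ j \<noteq> 1" and jn: "j \<le> n"
  shows "q^j * (1 - q^(n+1-j)) * ((-1)^j * q^(m*j + ((j+1) choose 2)) / (qpoch q q (n+1-j) * qpoch q q (m+j+1)))
       + (1 - q^(Suc j)) * ((-1)^(Suc j) * q^(m*(Suc j) + ((Suc j+1) choose 2)) / (qpoch q q (n+1-Suc j) * qpoch q q (m+Suc j+1)))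
       = (1 - q^(m+1)) * ((-1)^j * q^((m+1)*j + ((j+1) choose 2)) / (qpoch q q (n-j) * qpoch q q (m+1+j+1)))"
proof -
  obtain d where d: "n = j + d" using jn le_Suc_ex by blast
  define c where "c = (-1)^j * q^(m*j + ((j+1) choose 2))"
  define A where "A = qpoch q q d"
  define B where "B = qpoch q q (m+j+1)"
  have A0: "A \<noteq> 0" unfolding A_def using qpoch_nz[OF nz] .
  have B0: "B \<noteq> 0" unfolding B_def using qpoch_nz[OF nz] .
  have e1: "n+1-j = Suc d" using d by simp
  have e2: "n+1-Suc j = d" using d by simp
  have e3: "n - j = d" using d by simp
  have e4: "m + Suc j + 1 = Suc (m+j+1)" "m+1+j+1 = Suc (m+j+1)" by simp_all
  have d1: "1 - q^(Suc d) \<noteq> 0" using nz1[OF nz, of "Suc d"] by simp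
  have d2: "1 - q^(m+j+2) \<noteq> 0" using nz1[OF nz, of "m+j+2"] by simp
  have p1: "qpoch q q (Suc d) = A * (1 - q^(Suc d))" unfolding A_def by (simp add: qpoch_Suc)
  have p2: "qpoch q q (Suc (m+j+1)) = B * (1 - q^(m+j+2))" unfolding B_def by (simp add: qpoch_Suc)
  have x1: "(-1)^(Suc j) * q^(m*(Suc j) + ((Suc j+1) choose 2)) = - c * q^(m+j+1)"
    unfolding c_def choose2_Suc by (simp add: power_add algebra_simps)
  have x2: "(-1)^j * q^((m+1)*j + ((j+1) choose 2)) = c * q^j"
    unfolding c_def by (simp add: power_add algebra_simps)
  define a where "a = q^j"
  define b where "b = q^(m+1)"
  define e where "e = q^(Suc d)"
  have h1: "q^(m+j+2) = b * (q * a)" unfolding a_def b_def by (simp add: power_add[symmetric])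
  have h2: "q^(m+j+1) = b * a" unfolding a_def b_def by (simp add: power_add[symmetric])
  have h3: "q^(Suc j) = q * a" unfolding a_def by simp
  have gen: "\<And>A B c a b e q. A \<noteq> 0 \<Longrightarrow> B \<noteq> 0 \<Longrightarrow> (1::'a) - e \<noteq> 0 \<Longrightarrow> 1 - b*(q*a) \<noteq> 0 \<Longrightarrow>
     a * (1 - e) * (c / (A * (1 - e) * B)) + (1 - q*a) * (- c * (b*a) / (A * (B * (1 - b*(q*a)))))
     = (1 - b) * (c * a / (A * (B * (1 - b*(q*a)))))"
  proof -
    fix A B c a b e q :: 'a
    assume H: "A \<noteq> 0" "B \<noteq> 0" "1 - e \<noteq> 0" "1 - b*(q*a) \<noteq> 0"
    have "a * (1 - e) * (c / (A * (1 - e) * B)) = a * c / (A * B)" using H by (simp add: field_simps)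
    moreover have "a * c / (A * B) + (1 - q*a) * (- c * (b*a) / (A * (B * (1 - b*(q*a)))))
      = (1 - b) * (c * a / (A * (B * (1 - b*(q*a)))))"
      using H by (simp add: field_simps)
    ultimately show "a * (1 - e) * (c / (A * (1 - e) * B)) + (1 - q*a) * (- c * (b*a) / (A * (B * (1 - b*(q*a)))))
     = (1 - b) * (c * a / (A * (B * (1 - b*(q*a)))))" by simp
  qed
  show ?thesis
    unfolding e1 e2 e3 e4 x1 x2 p1 p2 A_def[symmetric] B_def[symmetric] c_def[symmetric]
    unfolding h1 h2 h3 a_def[symmetric] b_def[symmetric] e_def[symmetric]
    using gen A0 B0 d1 d2 unfolding h1 e_def[symmetric] by simp
qed

lemma sig_rec:
  fixes q :: "'a::field"
  assumes nz: "\<forall>j::nat. j \<ge> 1 \<longrightarrow> q ^ j \<noteq> 1"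
  shows "(1 - q^(n+1)) * sig q m (n+1) = (1 - q^(m+1)) * sig q (m+1) n"
proof -
  define a where "a k = (-1)^k * q^(m*k + ((k+1) choose 2)) / (qpoch q q (n+1-k) * qpoch q q (m+k+1))" for k
  define X where "X k = q^k * (1 - q^(n+1-k)) * a k" for k
  define Y where "Y k = (1 - q^k) * a k" for k
  have "(1 - q^(n+1)) * sig q m (n+1) = (\<Sum>k\<le>Suc n. (1 - q^(n+1)) * a k)"
    by (simp only: sig_def a_def sum_distrib_left Suc_eq_plus1)
  also have "\<dots> = (\<Sum>k\<le>Suc n. X k + Y k)"
  proof (rule sum.cong[OF refl])
    fix k assume "k \<in> {..Suc n}"
    then have "k \<le> n+1" by simp
    then have "q^k * q^(n+1-k) = q^(n+1)" by (simp add: power_add[symmetric])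
    then show "(1 - q^(n+1)) * a k = X k + Y k" unfolding X_def Y_def by (simp add: algebra_simps)
  qed
  also have "\<dots> = (\<Sum>k\<le>Suc n. X k) + (\<Sum>k\<le>Suc n. Y k)" by (simp add: sum.distrib)
  also have "(\<Sum>k\<le>Suc n. X k) = (\<Sum>k\<le>n. X k)" by (simp add: X_def)
  also have "(\<Sum>k\<le>Suc n. Y k) = (\<Sum>k\<le>n. Y (Suc k))" by (subst sum.atMost_Suc_shift) (simp add: Y_def)
  also have "(\<Sum>k\<le>n. X k) + (\<Sum>k\<le>n. Y (Suc k)) = (\<Sum>k\<le>n. X k + Y (Suc k))" by (simp add: sum.distrib)
  also have "\<dots> = (\<Sum>k\<le>n. (1 - q^(m+1)) * ((-1)^k * q^((m+1)*k + ((k+1) choose 2)) / (qpoch q q (n-k) * qpoch q q (m+1+k+1))))"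
  proof (rule sum.cong[OF refl])
    fix k assume "k \<in> {..n}"
    then have "k \<le> n" by simp
    from sig_term[OF nz this, of m] show "X k + Y (Suc k) = (1 - q^(m+1)) * ((-1)^k * q^((m+1)*k + ((k+1) choose 2)) / (qpoch q q (n-k) * qpoch q q (m+1+k+1)))"
      unfolding X_def Y_def a_def by simp
  qed
  also have "\<dots> = (1 - q^(m+1)) * sig q (m+1) n" unfolding sig_def by (simp add: sum_distrib_left)
  finally show ?thesis .
qed

lemma sig_closed:
  fixes q :: "'a::field"
  assumes nz: "\<forall>j::nat. j \<ge> 1 \<longrightarrow> q ^ j \<noteq> 1"
  shows "sig q m n = 1 / (qpoch q q n * qpoch q q m * (1 - q^(m+n+1)))"
proof (induction n arbitrary: m)
  case 0
  have c: "(Suc 0 choose 2) = 0" by (simp add: numeral_2_eq_2)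
  have "1 - q^(m+1) \<noteq> 0" using nz1[OF nz, of "m+1"] by simp
  then show ?case unfolding sig_def using qpoch_nz[OF nz, of m] by (simp add: qpoch_Suc c)
next
  case (Suc n)
  have r: "(1 - q^(n+1)) * sig q m (n+1) = (1 - q^(m+1)) * sig q (m+1) n" by (rule sig_rec[OF nz])
  have d1: "1 - q^(n+1) \<noteq> 0" using nz1[OF nz, of "n+1"] by simp
  have d2: "1 - q^(m+1) \<noteq> 0" using nz1[OF nz, of "m+1"] by simp
  have d3: "1 - q^(m+n+2) \<noteq> 0" using nz1[OF nz, of "m+n+2"] by simp
  have P1: "qpoch q q n \<noteq> 0" "qpoch q q m \<noteq> 0" using qpoch_nz[OF nz] by auto
  have e: "qpoch q q (Suc n) = qpoch q q n * (1 - q^(n+1))" "qpoch q q (Suc m) = qpoch q q m * (1 - q^(m+1))"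
    by (simp_all add: qpoch_Suc)
  have "sig q m (Suc n) = (1 - q^(m+1)) * sig q (m+1) n / (1 - q^(n+1))"
    using r d1 by (simp add: field_simps)
  also have "\<dots> = (1 - q^(m+1)) / (qpoch q q n * qpoch q q (Suc m) * (1 - q^(m+n+2))) / (1 - q^(n+1))"
    using Suc.IH[of "m+1"] by (simp add: add.commute add.left_commute)
  also have "\<dots> = 1 / (qpoch q q (Suc n) * qpoch q q m * (1 - q ^ (m + Suc n + 1)))"
  proof -
    have g: "\<And>(a::'a) b c A B. 1 - a \<noteq> 0 \<Longrightarrow> 1 - b \<noteq> 0 \<Longrightarrow> 1 - c \<noteq> 0 \<Longrightarrow> A \<noteq> 0 \<Longrightarrow> B \<noteq> 0 \<Longrightarrow>
       (1 - b) / (A * (B * (1 - b)) * (1 - c)) / (1 - a) = 1 / (A * (1 - a) * B * (1 - c))"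
      apply (simp only: divide_divide_eq_left)
      apply (subst frac_eq_eq)
        apply simp
       apply simp
      by algebra
    have "q ^ (m + Suc n + 1) = q^(m+n+2)" by simp
    then show ?thesis unfolding e using g[OF d1 d2 d3 P1] by simp
  qed
  finally show ?case .
qed

definition FF :: "'a::field \<Rightarrow> nat \<Rightarrow> nat \<Rightarrow> 'a" where
 "FF q m n = (\<Sum>k=1..n. (-1) ^ k * q ^ (m * k + ((k + 1) choose 2))
            / (qpoch q q k * qpoch q q (n - k) * qpoch (q ^ k) q (m + 1)))"

definition HH :: "'a::field \<Rightarrow> nat \<Rightarrow> 'a" where
 "HH q j = (\<Sum>k=1..j. q ^ k / (1 - q ^ k))"

lemma FF_step_term:
  fixes q :: "'a::field"
  assumes nz: "\<forall>j::nat. j \<ge> 1 \<longrightarrow> q ^ j \<noteq> 1" and k: "1 \<le> k" "k \<le> n"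
  shows "qpoch q q (Suc n) * ((-1) ^ k * q ^ (m * k + ((k + 1) choose 2))
            / (qpoch q q k * qpoch q q (Suc n - k) * qpoch (q ^ k) q (m + 1)))
       - qpoch q q n * ((-1) ^ k * q ^ (m * k + ((k + 1) choose 2))
            / (qpoch q q k * qpoch q q (n - k) * qpoch (q ^ k) q (m + 1)))
       = (-1)^k * q^(m*k + ((k+1) choose 2) + (n+1-k)) * qpoch q q n / (qpoch q q (n+1-k) * qpoch q q (k+m))"
proof -
  obtain d where d: "n = k + d" using k le_Suc_ex by blast
  define c where "c = (-1) ^ k * q ^ (m * k + ((k + 1) choose 2))"
  have sh: "qpoch q q k * qpoch (q ^ k) q (m + 1) = qpoch q q (k+m) * (1 - q^k)" by (rule qpoch_shift)
  have e1: "Suc n - k = Suc d" "n - k = d" "n + 1 - k = Suc d" using d by auto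
  have pn: "qpoch q q (Suc n) = qpoch q q n * (1 - q^(n+1))" by (simp add: qpoch_Suc)
  have pd: "qpoch q q (Suc d) = qpoch q q d * (1 - q^(d+1))" by (simp add: qpoch_Suc)
  have ex: "q^(m*k + ((k+1) choose 2) + (n+1-k)) = c' * q^(d+1)" if "c' = q^(m*k + ((k+1) choose 2))" for c'
    using that e1 by (simp add: power_add)
  have qn: "q^(n+1) = q^k * q^(d+1)" using d by (simp add: power_add[symmetric])
  have nzs: "qpoch q q n \<noteq> 0" "qpoch q q d \<noteq> 0" "qpoch q q (k+m) \<noteq> 0" using qpoch_nz[OF nz] by auto
  have n1: "1 - q^k \<noteq> 0" "1 - q^(d+1) \<noteq> 0" using nz1[OF nz, of k] nz1[OF nz, of "d+1"] k by auto
  define A where "A = qpoch q q n"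
  define B where "B = qpoch q q d"
  define C where "C = qpoch q q (k+m)"
  define u where "u = q^k"
  define v where "v = q^(d+1)"
  have g: "\<And>(c::'a) A B C u v. A \<noteq> 0 \<Longrightarrow> B \<noteq> 0 \<Longrightarrow> C \<noteq> 0 \<Longrightarrow> 1 - u \<noteq> 0 \<Longrightarrow> 1 - v \<noteq> 0 \<Longrightarrow>
     A * (1 - u*v) * (c / (C * (1 - u) * (B * (1 - v)))) - A * (c / (C * (1 - u) * B))
     = c * v * A / (B * (1 - v) * C)"
  proof -
    fix c A B C u v :: 'a
    assume H: "A \<noteq> 0" "B \<noteq> 0" "C \<noteq> 0" "1 - u \<noteq> 0" "1 - v \<noteq> 0"
    have s1: "A * (1 - u*v) * (c / (C * (1 - u) * (B * (1 - v)))) = (A*(1-u*v)*c) / (C * (1 - u) * B * (1 - v))"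
      by (simp add: ac_simps)
    have s2: "A * (c / (C * (1 - u) * B)) = (A*c*(1-v)) / (C * (1 - u) * B * (1 - v))"
      using H by simp
    have s4: "A*(1-u*v)*c - A*c*(1-v) = (A * c * v) * (1 - u)" by (simp add: algebra_simps)
    have s5: "((A * c * v) * (1 - u)) / (C * (1 - u) * B * (1 - v)) = c * v * A / (B * (1 - v) * C)"
      using H by (simp add: ac_simps)
    have "A * (1 - u*v) * (c / (C * (1 - u) * (B * (1 - v)))) - A * (c / (C * (1 - u) * B))
       = (A*(1-u*v)*c - A*c*(1-v)) / (C * (1 - u) * B * (1 - v))"
      unfolding s1 s2 by (rule diff_divide_distrib[symmetric])
    also have "\<dots> = c * v * A / (B * (1 - v) * C)" unfolding s4 s5 ..
    finally show "A * (1 - u*v) * (c / (C * (1 - u) * (B * (1 - v)))) - A * (c / (C * (1 - u) * B))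
     = c * v * A / (B * (1 - v) * C)" .
  qed
  have "q ^ (m * k + ((k + 1) choose 2) + (n + 1 - k)) = q ^ (m * k + ((k + 1) choose 2)) * v"
    unfolding v_def e1 by (simp add: power_add)
  then have ee: "(-1)^k * q^(m*k + ((k+1) choose 2) + (n+1-k)) = c * v" unfolding c_def by simp
  have den1: "qpoch q q k * qpoch q q (Suc n - k) * qpoch (q ^ k) q (m + 1) = C * (1-u) * (B*(1-v))"
  proof -
    have "qpoch q q k * qpoch q q (Suc n - k) * qpoch (q ^ k) q (m + 1)
       = (qpoch q q k * qpoch (q ^ k) q (m + 1)) * qpoch q q (Suc d)" by (simp add: e1 ac_simps)
    then show ?thesis unfolding sh pd C_def u_def B_def v_def by simp
  qed
  have den2: "qpoch q q k * qpoch q q (n - k) * qpoch (q ^ k) q (m + 1) = C * (1-u) * B"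
  proof -
    have "qpoch q q k * qpoch q q (n - k) * qpoch (q ^ k) q (m + 1)
       = (qpoch q q k * qpoch (q ^ k) q (m + 1)) * qpoch q q d" by (simp add: e1 ac_simps)
    then show ?thesis unfolding sh C_def u_def B_def by simp
  qed
  have pn': "qpoch q q (Suc n) = A * (1 - u*v)" unfolding pn A_def u_def v_def qn ..
  have den3: "qpoch q q (n+1-k) * qpoch q q (k+m) = B * (1 - v) * C"
    unfolding e1 pd B_def v_def C_def ..
  show ?thesis
    unfolding ee den1 den2 pn' den3 c_def[symmetric] A_def[symmetric]
    using g[of A B C u v c] nzs n1 unfolding A_def B_def C_def u_def v_def by simp
qed


lemma FF_last:
  fixes q :: "'a::field"
  assumes nz: "\<forall>j::nat. j \<ge> 1 \<longrightarrow> q ^ j \<noteq> 1"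
  shows "qpoch q q (Suc n) * ((-1) ^ Suc n * q ^ (m * Suc n + ((Suc n + 1) choose 2))
            / (qpoch q q (Suc n) * qpoch q q (Suc n - Suc n) * qpoch (q ^ Suc n) q (m + 1)))
       = (-1)^Suc n * q^(m*Suc n + ((Suc n+1) choose 2) + (n+1-Suc n)) * qpoch q q n / (qpoch q q (n+1-Suc n) * qpoch q q (Suc n+m))"
proof -
  have sh: "qpoch q q (Suc n) * qpoch (q ^ Suc n) q (m + 1) = qpoch q q (Suc n+m) * (1 - q^Suc n)" by (rule qpoch_shift)
  have pn: "qpoch q q (Suc n) = qpoch q q n * (1 - q^Suc n)" by (simp add: qpoch_Suc)
  have nzs: "qpoch q q (Suc n) \<noteq> 0" "qpoch q q (Suc n + m) \<noteq> 0" using qpoch_nz[OF nz] by auto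
  have n1: "1 - q^Suc n \<noteq> 0" using nz1[OF nz, of "Suc n"] by simp
  define c where "c = (-1) ^ Suc n * q ^ (m * Suc n + ((Suc n + 1) choose 2))"
  have "qpoch q q (Suc n) * (c / (qpoch q q (Suc n) * qpoch q q (Suc n - Suc n) * qpoch (q ^ Suc n) q (m + 1)))
      = c / qpoch (q ^ Suc n) q (m + 1)" using nzs by simp
  also have "\<dots> = c * qpoch q q (Suc n) / (qpoch q q (Suc n+m) * (1 - q^Suc n))"
  proof -
    have "qpoch (q ^ Suc n) q (m + 1) \<noteq> 0" using sh nzs n1 by (metis mult_eq_0_iff)
    then show ?thesis unfolding sh[symmetric] using nzs by simp
  qed
  also have "\<dots> = c * qpoch q q n / qpoch q q (Suc n+m)" unfolding pn using n1 by simp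
  finally show ?thesis unfolding c_def by simp
qed

lemma FF_rec:
  fixes q :: "'a::field"
  assumes nz: "\<forall>j::nat. j \<ge> 1 \<longrightarrow> q ^ j \<noteq> 1"
  shows "qpoch q q (Suc n) * FF q m (Suc n) - qpoch q q n * FF q m n = -(q^(m+n+1)) * qpoch q q n * sig q m n"
proof -
  define t where "t N k = (-1) ^ k * q ^ (m * k + ((k + 1) choose 2))
            / (qpoch q q k * qpoch q q (N - k) * qpoch (q ^ k) q (m + 1))" for N k
  define Z where "Z k = (-1)^k * q^(m*k + ((k+1) choose 2) + (n+1-k)) * qpoch q q n / (qpoch q q (n+1-k) * qpoch q q (k+m))" for k
  have F1: "FF q m (Suc n) = (\<Sum>k=1..n. t (Suc n) k) + t (Suc n) (Suc n)"
    unfolding FF_def t_def by simp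
  have F2: "FF q m n = (\<Sum>k=1..n. t n k)" unfolding FF_def t_def by simp
  have "qpoch q q (Suc n) * FF q m (Suc n) - qpoch q q n * FF q m n
      = (\<Sum>k=1..n. qpoch q q (Suc n) * t (Suc n) k - qpoch q q n * t n k) + qpoch q q (Suc n) * t (Suc n) (Suc n)"
    unfolding F1 F2 by (simp add: sum_distrib_left sum_subtractf algebra_simps)
  also have "(\<Sum>k=1..n. qpoch q q (Suc n) * t (Suc n) k - qpoch q q n * t n k) = (\<Sum>k=1..n. Z k)"
  proof (rule sum.cong[OF refl])
    fix k assume "k \<in> {1..n}"
    then have "1 \<le> k" "k \<le> n" by auto
    from FF_step_term[OF nz this, of m] show "qpoch q q (Suc n) * t (Suc n) k - qpoch q q n * t n k = Z k"
      unfolding t_def Z_def by simp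
  qed
  also have "qpoch q q (Suc n) * t (Suc n) (Suc n) = Z (Suc n)"
    unfolding t_def Z_def by (rule FF_last[OF nz])
  also have "(\<Sum>k=1..n. Z k) + Z (Suc n) = (\<Sum>k=1..Suc n. Z k)" by simp
  also have "\<dots> = (\<Sum>j\<le>n. Z (Suc j))"
    by (simp only: One_nat_def sum.shift_bounds_cl_Suc_ivl atLeast0AtMost)
  also have "\<dots> = (\<Sum>j\<le>n. -(q^(m+n+1)) * qpoch q q n * ((-1)^j * q^(m*j + ((j+1) choose 2)) / (qpoch q q (n-j) * qpoch q q (m+j+1))))"
  proof (rule sum.cong[OF refl])
    fix j assume "j \<in> {..n}"
    then have jn: "j \<le> n" by simp
    have ex: "m * Suc j + ((Suc j + 1) choose 2) + (n + 1 - Suc j) = (m*j + ((j+1) choose 2)) + (m+n+1)"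
      using jn unfolding choose2_Suc by simp
    have e2: "n + 1 - Suc j = n - j" "Suc j + m = m + j + 1" by simp_all
    have pw: "q^(m * Suc j + ((Suc j + 1) choose 2) + (n + 1 - Suc j)) = q^(m*j + ((j+1) choose 2)) * q^(m+n+1)"
      by (simp only: ex power_add)
    show "Z (Suc j) = -(q^(m+n+1)) * qpoch q q n * ((-1)^j * q^(m*j + ((j+1) choose 2)) / (qpoch q q (n-j) * qpoch q q (m+j+1)))"
      apply (simp only: Z_def)
      apply (simp only: pw)
      apply (simp only: e2)
      by (simp add: ac_simps)
  qed
  also have "\<dots> = -(q^(m+n+1)) * qpoch q q n * sig q m n" unfolding sig_def by (simp add: sum_distrib_left)
  finally show ?thesis .
qed

lemma FF_closed:
  fixes q :: "'a::field"
  assumes nz: "\<forall>j::nat. j \<ge> 1 \<longrightarrow> q ^ j \<noteq> 1"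
  shows "qpoch q q n * FF q m n = (HH q m - HH q (m+n)) / qpoch q q m"
proof (induction n)
  case 0 show ?case unfolding FF_def by simp
next
  case (Suc n)
  have pm: "qpoch q q m \<noteq> 0" "qpoch q q n \<noteq> 0" using qpoch_nz[OF nz] by auto
  have d: "1 - q^(m+n+1) \<noteq> 0" using nz1[OF nz, of "m+n+1"] by simp
  have "qpoch q q (Suc n) * FF q m (Suc n) = qpoch q q n * FF q m n - q^(m+n+1) * qpoch q q n * sig q m n"
    using FF_rec[OF nz, of n m] by (simp add: algebra_simps)
  also have "\<dots> = (HH q m - HH q (m+n)) / qpoch q q m - q^(m+n+1) / (qpoch q q m * (1 - q^(m+n+1)))"
    unfolding Suc.IH sig_closed[OF nz] using pm d by simp
  also have "\<dots> = (HH q m - HH q (m + Suc n)) / qpoch q q m"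
  proof -
    have "HH q (m + Suc n) = HH q (m+n) + q^(m+n+1) / (1 - q^(m+n+1))" unfolding HH_def by simp
    moreover have "\<And>(a::'a) h x y p. p \<noteq> 0 \<Longrightarrow> y \<noteq> 0 \<Longrightarrow> (a - h)/p - x/(p*y) = (a - (h + x/y))/p"
      by (simp add: field_simps)
    ultimately show ?thesis using pm d by simp
  qed
  finally show ?case .
qed


theorem corollary6p4:
  fixes q :: "'a::field_char_0" and m n :: nat
  assumes not_root_of_unity: "\<forall>j::nat. j \<ge> 1 \<longrightarrow> q ^ j \<noteq> 1"
  shows "(\<Sum>k=1..n. (-1) ^ k * q ^ (m * k + ((k + 1) choose 2))
            / (qpoch q q k * qpoch q q (n - k) * qpoch (q ^ k) q (m + 1)))
       - (\<Sum>k=1..m. (-1) ^ k * q ^ (n * k + ((k + 1) choose 2))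
            / (qpoch q q k * qpoch q q (m - k) * qpoch (q ^ k) q (n + 1)))
       = 1 / (qpoch q q m * qpoch q q n)
           * ((\<Sum>k=1..m. q ^ k / (1 - q ^ k)) - (\<Sum>k=1..n. q ^ k / (1 - q ^ k)))"
proof -
  have pm: "qpoch q q m \<noteq> 0" "qpoch q q n \<noteq> 0" using qpoch_nz[OF not_root_of_unity] by auto
  have A: "FF q m n = (HH q m - HH q (m+n)) / (qpoch q q m * qpoch q q n)"
    using FF_closed[OF not_root_of_unity, of n m] pm by (simp add: field_simps)
  have B: "FF q n m = (HH q n - HH q (m+n)) / (qpoch q q m * qpoch q q n)"
    using FF_closed[OF not_root_of_unity, of m n] pm by (simp add: field_simps add.commute)
  have "FF q m n - FF q n m = 1 / (qpoch q q m * qpoch q q n) * (HH q m - HH q n)"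
    unfolding A B by (simp add: diff_divide_distrib[symmetric])
  then show ?thesis unfolding FF_def HH_def .
qed

end
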